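(* Let $n\in\omega$ and let $\mathcal{F}$ be a fully $\Delta$-capturing construction scheme of type $\langle m_k,n_{k+1},r_{k+1}\rangle_{k\in\omega}$ with $n_{k+1}\geq 2^{m_k}$ for all $k$. With $o_\alpha$ defined as in the context, the set $\mathbb{E}_o=\{o_\alpha:\alpha\in\omega_1\}\subseteq\mathbb{Z}^\omega$, ordered lexicographically, is $(2n+1)$-entangled.
   Context: Construction schemes: a type is a sequence $\langle m_k,n_{k+1},r_{k+1}\rangle_{k\in\omega}$ with $m_0=1$, $n_{k+1}\geq2$, $m_k>r_{k+1}$, $m_{k+1}=r_{k+1}+(m_k-r_{k+1})n_{k+1}$. A construction scheme of this type is a family $\mathcal{F}$ of nonempty finite subsets of $\omega_1$, cofinal under $\subseteq$, each member of size $m_k$ for some $k$, such that with $\mathcal{F}_k=\{F\in\mathcal{F}:|F|=m_k\}$: (i) for $E,F\in\mathcal{F}_k$, $E\cap F$ is an initial segment of $E$ and of $F$; (ii) each $F\in\mathcal{F}_{k+1}$ is $F_0\cup\dots\cup F_{n_{k+1}-1}$ with $F_i\in\mathcal{F}_k$ a $\Delta$-system with root $R(F)$, $|R(F)|=r_{k+1}$, $R(F)<F_0\setminus R(F)<\dots<F_{n_{k+1}-1}\setminus R(F)$. Let $\rho(\alpha,\beta)=\min\{k:\exists F\in\mathcal{F}_k\ \{\alpha,\beta\}\subseteq F\}$, $\|\alpha\|_k=|\{\xi<\alpha:\rho(\alpha,\xi)\leq k\}|$, $\Delta(\alpha,\beta)=$ least $k$ with $\|\alpha\|_k\ne\|\beta\|_k$.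 $\Xi_\alpha(0)=0$ and for $k\geq1$, for any $F\in\mathcal{F}_k$ containing $\alpha$, $\Xi_\alpha(k)=-1$ if $\alpha\in R(F)$, $=i$ if $\alpha\in F_i\setminus R(F)$. For finite $X\subseteq\omega_1$, $X(i)$ is its $i$-th element. $\langle D_j\rangle_{j<N}\subseteq[\omega_1]^m$ ($N\geq2$) is $\Delta$-captured at level $l$ if it is a $\Delta$-system with root $R$ of size $r$, $R<D_j\setminus R$, tails pairwise $<$-comparable, $\Xi_{D_j(a)}(l)=-1$ for $a<r$ and $=j$ for $a\geq r$, and $\Delta(D_i(a),D_j(a))=l$ for $i\neq j$, $r\leq a<m$. $\mathcal{F}$ is fully $\Delta$-capturing if for every uncountable family $\mathcal{S}$ of finite subsets of $\omega_1$ there are infinitely many $l$ such that some $n_l$ members of $\mathcal{S}$ can be enumerated as a family $\Delta$-captured at level $l$. The functions: for each $k$, let $\langle C^k_i\rangle_{0<i<n_{k+1}}$ enumerate (possibly with repetitions) the set $[m_k\setminus r_{k+1}]^{\leq n}$ of subsets of $m_k\setminus r_{k+1}$ of size at most $n$. For $\alpha<\omega_1$ define $o_\alpha:\omega\to\mathbb{Z}$ by: $o_\alpha(k)=0$ if $\Xi_\alpha(k)\leq0$; $o_\alpha(k)=\Xi_\alpha(k)$ if $\Xi_\alpha(k)>0$ and $\|\alpha\|_{k-1}\in C^{k-1}_{\Xi_\alpha(k)}$; $o_\alpha(k)=-\Xi_\alpha(k)$ if $\Xi_\alpha(k)>0$ and $\|\alpha\|_{k-1}\notin C^{k-1}_{\Xi_\alpha(k)}$.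 $\mathbb{Z}^\omega$ is ordered by $f<_{lex}g$ iff $f(k)<g(k)$ for the least $k$ with $f(k)\neq g(k)$. For a linear order, an uncountable subset $\mathbb{E}$ is $k$-entangled if for every $\tau:k\to2$ and every uncountable family $\mathcal{A}\subseteq[\mathbb{E}]^k$ of pairwise disjoint sets there are distinct $a,b\in\mathcal{A}$ with $a(i)<b(i)\iff\tau(i)=0$ for all $i<k$. *)

theory Defs
  imports Main "HOL-Library.Countable_Set"
begin

text \<open>omega_1 is modelled by a well-ordered type 'a that is uncountable and all of whose
proper initial segments are countable (this characterises the order type omega_1).\<close>

definition set_less :: "'a::linorder set \<Rightarrow> 'a set \<Rightarrow> bool" where
  "set_less A B \<longleftrightarrow> (\<forall>a\<in>A. \<forall>b\<in>B. a < b)"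

definition init_seg :: "'a::linorder set \<Rightarrow> 'a set \<Rightarrow> bool" where
  "init_seg S E \<longleftrightarrow> S \<subseteq> E \<and> (\<forall>x\<in>S. \<forall>y\<in>E. y < x \<longrightarrow> y \<in> S)"

definition is_type :: "(nat \<Rightarrow> nat) \<Rightarrow> (nat \<Rightarrow> nat) \<Rightarrow> (nat \<Rightarrow> nat) \<Rightarrow> bool" where
  "is_type m nn rr \<longleftrightarrow> m 0 = 1 \<and>
     (\<forall>k. 2 \<le> nn (Suc k) \<and> rr (Suc k) < m k \<and>
          m (Suc k) = rr (Suc k) + (m k - rr (Suc k)) * nn (Suc k))"

definition level :: "(nat \<Rightarrow> nat) \<Rightarrow> 'a set set \<Rightarrow> nat \<Rightarrow> 'a set set" where
  "level m \<F> k = {F \<in> \<F>. card F = m k}"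

definition decomp :: "(nat \<Rightarrow> nat) \<Rightarrow> (nat \<Rightarrow> nat) \<Rightarrow> (nat \<Rightarrow> nat) \<Rightarrow> 'a::linorder set set
     \<Rightarrow> nat \<Rightarrow> 'a set \<Rightarrow> (nat \<Rightarrow> 'a set) \<Rightarrow> 'a set \<Rightarrow> bool" where
  "decomp m nn rr \<F> k F Fs R \<longleftrightarrow>
     F \<in> level m \<F> k \<and>
     (\<forall>i<nn k. Fs i \<in> level m \<F> (k - 1)) \<and>
     F = (\<Union>i<nn k. Fs i) \<and>
     (\<forall>i<nn k. \<forall>j<nn k. i \<noteq> j \<longrightarrow> Fs i \<inter> Fs j = R) \<and>
     card R = rr k \<and>
     set_less R (Fs 0 - R) \<and>
     (\<forall>i. Suc i < nn k \<longrightarrow> set_less (Fs i - R) (Fs (Suc i) - R))"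

definition construction_scheme :: "(nat \<Rightarrow> nat) \<Rightarrow> (nat \<Rightarrow> nat) \<Rightarrow> (nat \<Rightarrow> nat)
     \<Rightarrow> 'a::linorder set set \<Rightarrow> bool" where
  "construction_scheme m nn rr \<F> \<longleftrightarrow>
     is_type m nn rr \<and>
     (\<forall>F\<in>\<F>. F \<noteq> {} \<and> finite F \<and> (\<exists>k. card F = m k)) \<and>
     (\<forall>A. finite A \<longrightarrow> (\<exists>F\<in>\<F>. A \<subseteq> F)) \<and>
     (\<forall>k. \<forall>E\<in>level m \<F> k. \<forall>F\<in>level m \<F> k. init_seg (E \<inter> F) E \<and> init_seg (E \<inter> F) F) \<and>
     (\<forall>k. \<forall>F\<in>level m \<F> (Suc k). \<exists>Fs R. decomp m nn rr \<F> (Suc k) F Fs R)"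

definition rho :: "(nat \<Rightarrow> nat) \<Rightarrow> 'a set set \<Rightarrow> 'a \<Rightarrow> 'a \<Rightarrow> nat" where
  "rho m \<F> \<alpha> \<beta> = (LEAST k. \<exists>F\<in>level m \<F> k. \<alpha> \<in> F \<and> \<beta> \<in> F)"

definition knorm :: "(nat \<Rightarrow> nat) \<Rightarrow> 'a::linorder set set \<Rightarrow> 'a \<Rightarrow> nat \<Rightarrow> nat" where
  "knorm m \<F> \<alpha> k = card {\<xi>. \<xi> < \<alpha> \<and> rho m \<F> \<alpha> \<xi> \<le> k}"

definition Delta :: "(nat \<Rightarrow> nat) \<Rightarrow> 'a::linorder set set \<Rightarrow> 'a \<Rightarrow> 'a \<Rightarrow> nat" where
  "Delta m \<F> \<alpha> \<beta> = (LEAST k. knorm m \<F> \<alpha> k \<noteq> knorm m \<F> \<beta> k)"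

definition Xi :: "(nat \<Rightarrow> nat) \<Rightarrow> (nat \<Rightarrow> nat) \<Rightarrow> (nat \<Rightarrow> nat) \<Rightarrow> 'a::linorder set set
     \<Rightarrow> 'a \<Rightarrow> nat \<Rightarrow> int" where
  "Xi m nn rr \<F> \<alpha> k = (if k = 0 then 0 else
     (THE v. \<exists>F Fs R. decomp m nn rr \<F> k F Fs R \<and> \<alpha> \<in> F \<and>
        ((\<alpha> \<in> R \<and> v = -1) \<or> (\<exists>i<nn k. \<alpha> \<in> Fs i - R \<and> v = int i))))"

definition nth_el :: "'a::linorder set \<Rightarrow> nat \<Rightarrow> 'a" where
  "nth_el X i = sorted_list_of_set X ! i"

definition captured :: "(nat \<Rightarrow> nat) \<Rightarrow> (nat \<Rightarrow> nat) \<Rightarrow> (nat \<Rightarrow> nat) \<Rightarrow> 'a::linorder set set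
     \<Rightarrow> nat \<Rightarrow> (nat \<Rightarrow> 'a set) \<Rightarrow> nat \<Rightarrow> bool" where
  "captured m nn rr \<F> l D N \<longleftrightarrow> 2 \<le> N \<and>
     (\<exists>mm. \<forall>j<N. finite (D j) \<and> card (D j) = mm) \<and>
     (\<exists>R. (\<forall>i<N. \<forall>j<N. i \<noteq> j \<longrightarrow> D i \<inter> D j = R) \<and>
          (\<forall>j<N. set_less R (D j - R)) \<and>
          (\<forall>i<N. \<forall>j<N. i \<noteq> j \<longrightarrow> set_less (D i - R) (D j - R) \<or> set_less (D j - R) (D i - R)) \<and>
          (\<forall>j<N. \<forall>a<card R. Xi m nn rr \<F> (nth_el (D j) a) l = -1) \<and>
          (\<forall>j<N. \<forall>a. card R \<le> a \<and> a < card (D j) \<longrightarrow> Xi m nn rr \<F> (nth_el (D j) a) l = int j) \<and>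
          (\<forall>i<N. \<forall>j<N. i \<noteq> j \<longrightarrow> (\<forall>a. card R \<le> a \<and> a < card (D i) \<longrightarrow>
               Delta m \<F> (nth_el (D i) a) (nth_el (D j) a) = l)))"

definition fully_capturing :: "(nat \<Rightarrow> nat) \<Rightarrow> (nat \<Rightarrow> nat) \<Rightarrow> (nat \<Rightarrow> nat) \<Rightarrow> 'a::linorder set set \<Rightarrow> bool" where
  "fully_capturing m nn rr \<F> \<longleftrightarrow>
     (\<forall>S. (\<forall>X\<in>S. finite X) \<and> \<not> countable S \<longrightarrow>
        infinite {l. 0 < l \<and> (\<exists>D. inj_on D {..<nn l} \<and> (\<forall>j<nn l. D j \<in> S) \<and>
                                   captured m nn rr \<F> l D (nn l))})"

definition o_fun :: "(nat \<Rightarrow> nat) \<Rightarrow> (nat \<Rightarrow> nat) \<Rightarrow> (nat \<Rightarrow> nat) \<Rightarrow> 'a::linorder set set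
     \<Rightarrow> (nat \<Rightarrow> nat \<Rightarrow> nat set) \<Rightarrow> 'a \<Rightarrow> nat \<Rightarrow> int" where
  "o_fun m nn rr \<F> C \<alpha> k =
     (let x = Xi m nn rr \<F> \<alpha> k in
      if x \<le> 0 then 0
      else if knorm m \<F> \<alpha> (k - 1) \<in> C (k - 1) (nat x) then x else - x)"

definition lex_less :: "(nat \<Rightarrow> int) \<Rightarrow> (nat \<Rightarrow> int) \<Rightarrow> bool" where
  "lex_less f g \<longleftrightarrow> (\<exists>k. f k < g k \<and> (\<forall>j<k. f j = g j))"

definition ord_nth :: "('b \<Rightarrow> 'b \<Rightarrow> bool) \<Rightarrow> 'b set \<Rightarrow> nat \<Rightarrow> 'b" where
  "ord_nth lt a i = (THE x. x \<in> a \<and> card {y \<in> a. lt y x} = i)"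

definition entangled :: "('b \<Rightarrow> 'b \<Rightarrow> bool) \<Rightarrow> nat \<Rightarrow> 'b set \<Rightarrow> bool" where
  "entangled lt k E \<longleftrightarrow> \<not> countable E \<and>
     (\<forall>(\<tau>::nat \<Rightarrow> nat) \<A>. (\<forall>i<k. \<tau> i < 2) \<and>
        \<A> \<subseteq> {a. a \<subseteq> E \<and> finite a \<and> card a = k} \<and> \<not> countable \<A> \<and>
        (\<forall>a\<in>\<A>. \<forall>b\<in>\<A>. a \<noteq> b \<longrightarrow> a \<inter> b = {}) \<longrightarrow>
        (\<exists>a\<in>\<A>. \<exists>b\<in>\<A>. a \<noteq> b \<and>
           (\<forall>i<k. lt (ord_nth lt a i) (ord_nth lt b i) \<longleftrightarrow> \<tau> i = 0)))"

end

theory Submission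
  imports Defs
begin


locale cs =
  fixes m nn rr :: "nat \<Rightarrow> nat" and FF :: "'a::linorder set set"
  assumes scheme: "construction_scheme m nn rr FF"
    and infU: "infinite (UNIV :: 'a set)"
begin

lemma cs_parts: "is_type m nn rr"
    "\<forall>F\<in>FF. F \<noteq> {} \<and> finite F \<and> (\<exists>k. card F = m k)"
    "\<forall>A. finite A \<longrightarrow> (\<exists>F\<in>FF. A \<subseteq> F)"
    "\<forall>k. \<forall>E\<in>level m FF k. \<forall>F\<in>level m FF k. init_seg (E \<inter> F) E \<and> init_seg (E \<inter> F) F"
    "\<forall>k. \<forall>F\<in>level m FF (Suc k). \<exists>Fs R. decomp m nn rr FF (Suc k) F Fs R"
  using scheme unfolding construction_scheme_def by auto

lemma typ_parts: "m 0 = 1" "2 \<le> nn (Suc k)" "rr (Suc k) < m k"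
   "m (Suc k) = rr (Suc k) + (m k - rr (Suc k)) * nn (Suc k)"
  using cs_parts(1) unfolding is_type_def by auto

lemma m0: "m 0 = 1" by (rule typ_parts)
lemma nn2: "2 \<le> nn (Suc k)" by (rule typ_parts)
lemma rr_lt: "rr (Suc k) < m k" by (rule typ_parts)
lemma m_Suc: "m (Suc k) = rr (Suc k) + (m k - rr (Suc k)) * nn (Suc k)" by (rule typ_parts)

lemma m_less_Suc: "m k < m (Suc k)"
proof -
  have a: "rr (Suc k) < m k" by (rule rr_lt)
  have "(m k - rr (Suc k)) * 2 \<le> (m k - rr (Suc k)) * nn (Suc k)" using nn2 by simp
  then show ?thesis using a m_Suc[of k] by linarith
qed

lemma m_mono: "strict_mono m"
  unfolding strict_mono_Suc_iff using m_less_Suc by blast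

lemma m_pos: "1 \<le> m k"
proof -
  have "m 0 \<le> m k" using m_mono by (simp add: strict_mono_less_eq)
  then show ?thesis using m0 by simp
qed

lemma level_D: "F \<in> level m FF k \<Longrightarrow> F \<in> FF \<and> finite F \<and> card F = m k"
  using cs_parts(2) unfolding level_def by auto

lemma level_ne: "F \<in> level m FF k \<Longrightarrow> F \<noteq> {}"
  using level_D[of F k] m_pos[of k] by auto

lemma cofinal: "finite A \<Longrightarrow> \<exists>F\<in>FF. A \<subseteq> F"
  using cs_parts(3) by auto

lemma in_some_level: "F \<in> FF \<Longrightarrow> \<exists>k. F \<in> level m FF k"
  using cs_parts(2) unfolding level_def by auto

lemma coh: "E \<in> level m FF k \<Longrightarrow> F \<in> level m FF k \<Longrightarrow> x \<in> E \<Longrightarrow> x \<in> F \<Longrightarrow> y \<in> E \<Longrightarrow> y \<le> x \<Longrightarrow> y \<in> F"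
proof -
  assume a: "E \<in> level m FF k" "F \<in> level m FF k" "x \<in> E" "x \<in> F" "y \<in> E" "y \<le> x"
  have "init_seg (E \<inter> F) E" using cs_parts(4) a(1,2) by blast
  then have "\<forall>x\<in>E \<inter> F. \<forall>y\<in>E. y < x \<longrightarrow> y \<in> E \<inter> F" unfolding init_seg_def by blast
  then show "y \<in> F" using a by (cases "y = x") auto
qed

lemma coh_sub: "E \<in> level m FF k \<Longrightarrow> F \<in> level m FF k \<Longrightarrow> x \<in> E \<Longrightarrow> x \<in> F \<Longrightarrow> \<forall>y\<in>E. y \<le> x \<Longrightarrow> E \<subseteq> F"
  using coh by blast

lemma decomp_ex: "F \<in> level m FF (Suc k) \<Longrightarrow> \<exists>Fs R. decomp m nn rr FF (Suc k) F Fs R"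
  using cs_parts(5) by blast

lemma down: "H \<in> level m FF j \<Longrightarrow> k \<le> j \<Longrightarrow> x \<in> H \<Longrightarrow> \<exists>H'\<in>level m FF k. x \<in> H' \<and> H' \<subseteq> H"
proof (induction j arbitrary: H x)
  case 0 then show ?case by auto
next
  case (Suc j)
  show ?case
  proof (cases "k = Suc j")
    case True then show ?thesis using Suc by auto
  next
    case False
    then have kj: "k \<le> j" using Suc by simp
    obtain Fs R where d: "decomp m nn rr FF (Suc j) H Fs R" using decomp_ex Suc by blast
    then obtain i where i: "i < nn (Suc j)" "x \<in> Fs i" using Suc(4) unfolding decomp_def by blast
    have "Fs i \<in> level m FF j" "Fs i \<subseteq> H" using d i unfolding decomp_def by auto
    then show ?thesis using Suc.IH[OF _ kj i(2)] by blast
  qed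
qed

lemma big: "finite A \<Longrightarrow> \<exists>j\<ge>k. \<exists>H\<in>level m FF j. A \<subseteq> H"
proof -
  assume fA: "finite A"
  obtain B :: "'a set" where B: "finite B" "card B = m k" using infinite_arbitrarily_large[OF infU] by blast
  obtain H where H: "H \<in> FF" "A \<union> B \<subseteq> H" using cofinal[of "A \<union> B"] fA B by blast
  obtain j where j: "H \<in> level m FF j" using in_some_level H by blast
  have "B \<subseteq> H" using H(2) by blast
  then have "card B \<le> card H" using level_D[OF j] by (intro card_mono) auto
  then have "m k \<le> card H" using B(2) by simp
  then have "m k \<le> m j" using level_D[OF j] by simp
  then have "k \<le> j" using m_mono by (simp add: strict_mono_less_eq)
  then show ?thesis using H(2) j by auto
qed

lemma lift: "G \<in> level m FF k' \<Longrightarrow> k' \<le> k \<Longrightarrow> \<exists>G'\<in>level m FF k. G \<subseteq> G'"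
proof -
  assume G: "G \<in> level m FF k'" and kk: "k' \<le> k"
  have fG: "finite G" "G \<noteq> {}" using level_D[OF G] level_ne[OF G] by auto
  define x where "x = Max G"
  have x: "x \<in> G" "\<forall>y\<in>G. y \<le> x" using fG unfolding x_def by auto
  obtain j H where H: "j \<ge> k" "H \<in> level m FF j" "G \<subseteq> H" using big[OF fG(1), of k] by blast
  obtain G' where G': "G' \<in> level m FF k" "x \<in> G'" "G' \<subseteq> H" using down[OF H(2) H(1)] x H(3) by blast
  obtain G'' where G'': "G'' \<in> level m FF k'" "x \<in> G''" "G'' \<subseteq> G'" using down[OF G'(1) kk G'(2)] by blast
  have "G \<subseteq> G''" using coh_sub[OF G G''(1) x(1) G''(2) x(2)] .
  then show ?thesis using G' G'' by blast
qed

lemma exists_level: "\<exists>F\<in>level m FF k. x \<in> F"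
proof -
  obtain j H where H: "j \<ge> k" "H \<in> level m FF j" "{x} \<subseteq> H" using big[of "{x}" k] by auto
  then show ?thesis using down[OF H(2) H(1)] by auto
qed

lemma pair_level: "\<exists>k. \<exists>F\<in>level m FF k. a \<in> F \<and> b \<in> F"
proof -
  obtain j H where H: "H \<in> level m FF j" "{a,b} \<subseteq> H" using big[of "{a,b}" 0] by auto
  then show ?thesis by auto
qed

lemma rho_le: "F \<in> level m FF k \<Longrightarrow> a \<in> F \<Longrightarrow> b \<in> F \<Longrightarrow> rho m FF a b \<le> k"
  unfolding rho_def by (rule Least_le) blast

lemma rho_wit: "\<exists>F\<in>level m FF (rho m FF a b). a \<in> F \<and> b \<in> F"
  unfolding rho_def by (rule LeastI_ex) (rule pair_level)

lemma L1: "F \<in> level m FF k \<Longrightarrow> a \<in> F \<Longrightarrow> {\<xi>. \<xi> < a \<and> rho m FF a \<xi> \<le> k} = {\<xi>\<in>F. \<xi> < a}"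
proof (intro set_eqI iffI)
  fix \<xi> assume F: "F \<in> level m FF k" and a: "a \<in> F" and x: "\<xi> \<in> {\<xi>. \<xi> < a \<and> rho m FF a \<xi> \<le> k}"
  obtain G where G: "G \<in> level m FF (rho m FF a \<xi>)" "a \<in> G" "\<xi> \<in> G" using rho_wit by blast
  obtain G' where G': "G' \<in> level m FF k" "G \<subseteq> G'" using lift[OF G(1)] x by auto
  have "\<xi> \<in> F" using coh[OF G'(1) F _ a, of \<xi>] G G' x by (auto intro: less_imp_le)
  then show "\<xi> \<in> {\<xi>\<in>F. \<xi> < a}" using x by auto
next
  fix \<xi> assume F: "F \<in> level m FF k" and a: "a \<in> F" and x: "\<xi> \<in> {\<xi>\<in>F. \<xi> < a}"
  then show "\<xi> \<in> {\<xi>. \<xi> < a \<and> rho m FF a \<xi> \<le> k}" using rho_le[OF F a] by auto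
qed

lemma knorm_eq: "F \<in> level m FF k \<Longrightarrow> a \<in> F \<Longrightarrow> knorm m FF a k = card {\<xi>\<in>F. \<xi> < a}"
  unfolding knorm_def using L1 by simp

end


lemma set_less_trans: "set_less A B \<Longrightarrow> set_less B C \<Longrightarrow> B \<noteq> {} \<Longrightarrow> set_less A C"
  unfolding set_less_def by (meson ex_in_conv less_trans)

context cs begin

lemma dec_lv: "decomp m nn rr FF (Suc k) F Fs R \<Longrightarrow> F \<in> level m FF (Suc k)"
  unfolding decomp_def by blast
lemma dec_Fs: "decomp m nn rr FF (Suc k) F Fs R \<Longrightarrow> i < nn (Suc k) \<Longrightarrow> Fs i \<in> level m FF k"
  unfolding decomp_def by auto
lemma dec_U: "decomp m nn rr FF (Suc k) F Fs R \<Longrightarrow> F = (\<Union>i<nn (Suc k). Fs i)"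
  unfolding decomp_def by blast
lemma dec_int: "decomp m nn rr FF (Suc k) F Fs R \<Longrightarrow> i < nn (Suc k) \<Longrightarrow> j < nn (Suc k) \<Longrightarrow> i \<noteq> j \<Longrightarrow> Fs i \<inter> Fs j = R"
  unfolding decomp_def by blast
lemma dec_cardR: "decomp m nn rr FF (Suc k) F Fs R \<Longrightarrow> card R = rr (Suc k)"
  unfolding decomp_def by blast
lemma dec_R0: "decomp m nn rr FF (Suc k) F Fs R \<Longrightarrow> set_less R (Fs 0 - R)"
  unfolding decomp_def by blast
lemma dec_step: "decomp m nn rr FF (Suc k) F Fs R \<Longrightarrow> Suc i < nn (Suc k) \<Longrightarrow> set_less (Fs i - R) (Fs (Suc i) - R)"
  unfolding decomp_def by blast

lemma R_sub: assumes d: "decomp m nn rr FF (Suc k) F Fs R" and i: "i < nn (Suc k)" shows "R \<subseteq> Fs i"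
proof (cases "i = 0")
  case True
  have "Fs 0 \<inter> Fs 1 = R" using dec_int[OF d, of 0 1] nn2[of k] by auto
  then show ?thesis using True by auto
next
  case False
  have "Fs 0 \<inter> Fs i = R" using dec_int[OF d, of 0 i] i False by auto
  then show ?thesis by auto
qed

lemma R_fin: "decomp m nn rr FF (Suc k) F Fs R \<Longrightarrow> finite R"
  using R_sub[of k F Fs R 0] nn2[of k] dec_Fs[of k F Fs R 0] level_D finite_subset by fastforce

lemma blk_card: assumes d: "decomp m nn rr FF (Suc k) F Fs R" and i: "i < nn (Suc k)"
  shows "card (Fs i - R) = m k - rr (Suc k)" "finite (Fs i - R)" "Fs i - R \<noteq> {}"
proof -
  have a: "R \<subseteq> Fs i" "finite (Fs i)" "card (Fs i) = m k" using R_sub[OF d i] level_D[OF dec_Fs[OF d i]] by auto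
  show c: "card (Fs i - R) = m k - rr (Suc k)" using card_Diff_subset[OF finite_subset[OF a(1) a(2)] a(1)] a dec_cardR[OF d] by simp
  show "finite (Fs i - R)" using a by simp
  show "Fs i - R \<noteq> {}" using c rr_lt[of k] by (metis card.empty zero_less_diff less_irrefl)
qed

lemma chain: assumes d: "decomp m nn rr FF (Suc k) F Fs R"
  shows "i < j \<Longrightarrow> j < nn (Suc k) \<Longrightarrow> set_less (Fs i - R) (Fs j - R)"
proof (induction j)
  case 0 then show ?case by simp
next
  case (Suc j)
  show ?case
  proof (cases "i = j")
    case True then show ?thesis using dec_step[OF d] Suc by simp
  next
    case False
    then have "set_less (Fs i - R) (Fs j - R)" using Suc by simp
    moreover have "set_less (Fs j - R) (Fs (Suc j) - R)" using dec_step[OF d] Suc by simp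
    moreover have "Fs j - R \<noteq> {}" using blk_card(3)[OF d, of j] Suc by simp
    ultimately show ?thesis by (rule set_less_trans)
  qed
qed

lemma R_below: assumes d: "decomp m nn rr FF (Suc k) F Fs R" and i: "i < nn (Suc k)"
  shows "set_less R (Fs i - R)"
proof (cases "i = 0")
  case True then show ?thesis using dec_R0[OF d] by simp
next
  case False
  then show ?thesis using set_less_trans[OF dec_R0[OF d] chain[OF d, of 0 i]] blk_card(3)[OF d, of 0] i by simp
qed

end


context cs begin

lemma below_set: assumes d: "decomp m nn rr FF (Suc k) F Fs R" and i: "i < nn (Suc k)" and a: "a \<in> Fs i - R"
  shows "{\<xi>\<in>F. \<xi> < a} = R \<union> (\<Union>j<i. Fs j - R) \<union> {\<xi>\<in>Fs i - R. \<xi> < a}"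
proof (intro set_eqI iffI)
  fix x assume x: "x \<in> {\<xi>\<in>F. \<xi> < a}"
  then obtain j where j: "j < nn (Suc k)" "x \<in> Fs j" using dec_U[OF d] by auto
  show "x \<in> R \<union> (\<Union>j<i. Fs j - R) \<union> {\<xi>\<in>Fs i - R. \<xi> < a}"
  proof (cases "x \<in> R")
    case False
    consider "j < i" | "j = i" | "i < j" by linarith
    then show ?thesis
    proof cases
      case 3
      have "set_less (Fs i - R) (Fs j - R)" using chain[OF d 3 j(1)] .
      then have "a < x" using a j False unfolding set_less_def by auto
      then show ?thesis using x by auto
    qed (use j x False in auto)
  qed auto
next
  fix x assume x: "x \<in> R \<union> (\<Union>j<i. Fs j - R) \<union> {\<xi>\<in>Fs i - R. \<xi> < a}"
  have FU: "F = (\<Union>i<nn (Suc k). Fs i)" using dec_U[OF d] .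
  show "x \<in> {\<xi>\<in>F. \<xi> < a}"
  proof (cases "x \<in> R")
    case True
    then have "x < a" using R_below[OF d i] a unfolding set_less_def by auto
    moreover have "x \<in> F" using True R_sub[OF d i] i FU by auto
    ultimately show ?thesis by auto
  next
    case False
    show ?thesis
    proof (cases "x \<in> (\<Union>j<i. Fs j - R)")
      case True
      then obtain j where j: "j < i" "x \<in> Fs j - R" by auto
      then have "x < a" using chain[OF d j(1) i] a unfolding set_less_def by auto
      moreover have "x \<in> F" using j i FU by auto
      ultimately show ?thesis by auto
    next
      case False
      then have "x \<in> Fs i" "x < a" using x `x \<notin> R` by auto
      then show ?thesis using i FU by auto
    qed
  qed
qed

lemma pos_block: assumes d: "decomp m nn rr FF (Suc k) F Fs R" and i: "i < nn (Suc k)" and a: "a \<in> Fs i - R"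
  shows "knorm m FF a (Suc k) = rr (Suc k) + i * (m k - rr (Suc k)) + card {\<xi>\<in>Fs i - R. \<xi> < a}"
    "card {\<xi>\<in>Fs i - R. \<xi> < a} < m k - rr (Suc k)"
proof -
  have FU: "F = (\<Union>i<nn (Suc k). Fs i)" using dec_U[OF d] .
  have aF: "a \<in> F" using a i FU by auto
  have kn: "knorm m FF a (Suc k) = card {\<xi>\<in>F. \<xi> < a}" using knorm_eq[OF dec_lv[OF d] aF] .
  have fR: "finite R" using R_fin[OF d] .
  have fB: "\<And>j. j < nn (Suc k) \<Longrightarrow> finite (Fs j - R)" using blk_card(2)[OF d] .
  have fU: "finite (\<Union>j<i. Fs j - R)" using fB i by (intro finite_UN_I) auto
  have fL: "finite {\<xi>\<in>Fs i - R. \<xi> < a}" using fB[OF i] by (rule finite_subset[rotated]) auto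
  have cU: "card (\<Union>j<i. Fs j - R) = i * (m k - rr (Suc k))"
  proof -
    have "card (\<Union>j<i. Fs j - R) = (\<Sum>j<i. card (Fs j - R))"
    proof (rule card_UN_disjoint)
      show "finite {..<i}" by simp
      show "\<forall>j\<in>{..<i}. finite (Fs j - R)" using fB i by auto
      show "\<forall>j\<in>{..<i}. \<forall>j'\<in>{..<i}. j \<noteq> j' \<longrightarrow> (Fs j - R) \<inter> (Fs j' - R) = {}"
      proof (intro ballI impI)
        fix j j' assume "j \<in> {..<i}" "j' \<in> {..<i}" "j \<noteq> j'"
        then have "Fs j \<inter> Fs j' = R" using dec_int[OF d, of j j'] i by auto
        then show "(Fs j - R) \<inter> (Fs j' - R) = {}" by blast
      qed
    qed
    also have "\<dots> = (\<Sum>j<i. m k - rr (Suc k))" using blk_card(1)[OF d] i by (intro sum.cong) auto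
    finally show ?thesis by simp
  qed
  have d1: "R \<inter> (\<Union>j<i. Fs j - R) = {}" by auto
  have d2: "(R \<union> (\<Union>j<i. Fs j - R)) \<inter> {\<xi>\<in>Fs i - R. \<xi> < a} = {}"
  proof -
    have "(Fs j - R) \<inter> (Fs i - R) = {}" if "j < i" for j
    proof -
      have "Fs j \<inter> Fs i = R" using dec_int[OF d, of j i] i that by auto
      then show ?thesis by blast
    qed
    then show ?thesis by blast
  qed
  have "card {\<xi>\<in>F. \<xi> < a} = card (R \<union> (\<Union>j<i. Fs j - R)) + card {\<xi>\<in>Fs i - R. \<xi> < a}"
    unfolding below_set[OF d i a] using d2 fR fU fL by (intro card_Un_disjoint) auto
  also have "card (R \<union> (\<Union>j<i. Fs j - R)) = card R + card (\<Union>j<i. Fs j - R)"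
    using d1 fR fU by (intro card_Un_disjoint) auto
  finally show "knorm m FF a (Suc k) = rr (Suc k) + i * (m k - rr (Suc k)) + card {\<xi>\<in>Fs i - R. \<xi> < a}"
    using kn cU dec_cardR[OF d] by simp
  have "{\<xi>\<in>Fs i - R. \<xi> < a} \<subset> Fs i - R" using a by auto
  then show "card {\<xi>\<in>Fs i - R. \<xi> < a} < m k - rr (Suc k)"
    using psubset_card_mono[OF fB[OF i]] blk_card(1)[OF d i] by simp
qed

lemma pos_root: assumes d: "decomp m nn rr FF (Suc k) F Fs R" and a: "a \<in> R"
  shows "knorm m FF a (Suc k) < rr (Suc k)"
proof -
  have FU: "F = (\<Union>i<nn (Suc k). Fs i)" using dec_U[OF d] .
  have n0: "0 < nn (Suc k)" using nn2[of k] by simp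
  have aF: "a \<in> F" using a R_sub[OF d n0] n0 FU by auto
  have kn: "knorm m FF a (Suc k) = card {\<xi>\<in>F. \<xi> < a}" using knorm_eq[OF dec_lv[OF d] aF] .
  have sub: "{\<xi>\<in>F. \<xi> < a} \<subseteq> R - {a}"
  proof
    fix x assume x: "x \<in> {\<xi>\<in>F. \<xi> < a}"
    then obtain j where j: "j < nn (Suc k)" "x \<in> Fs j" using FU by auto
    have "x \<in> R"
    proof (rule ccontr)
      assume "x \<notin> R"
      then have "a < x" using R_below[OF d j(1)] a j unfolding set_less_def by auto
      then show False using x by auto
    qed
    then show "x \<in> R - {a}" using x by auto
  qed
  have "card {\<xi>\<in>F. \<xi> < a} \<le> card (R - {a})" using sub R_fin[OF d] by (intro card_mono) auto
  also have "\<dots> < card R" using R_fin[OF d] a by (meson card_Diff1_less)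
  finally show ?thesis using kn dec_cardR[OF d] by simp
qed

definition gfun :: "nat \<Rightarrow> nat \<Rightarrow> int" where
  "gfun k p = (if p < rr k then -1 else int ((p - rr k) div (m (k - 1) - rr k)))"

lemma div_aux: "q < (d::nat) \<Longrightarrow> (i * d + q) div d = i"
  by (metis add.commute div_less div_mult_self2 add_0 mult.commute not_less0 less_nat_zero_code)

lemma g_block: assumes d: "decomp m nn rr FF (Suc k) F Fs R" and i: "i < nn (Suc k)" and a: "a \<in> Fs i - R"
  shows "gfun (Suc k) (knorm m FF a (Suc k)) = int i"
proof -
  let ?q = "card {\<xi>\<in>Fs i - R. \<xi> < a}"
  have "(i * (m k - rr (Suc k)) + ?q) div (m k - rr (Suc k)) = i" using pos_block(2)[OF d i a] by (rule div_aux)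
  then show ?thesis unfolding gfun_def pos_block(1)[OF d i a] by simp
qed

lemma g_root: assumes d: "decomp m nn rr FF (Suc k) F Fs R" and a: "a \<in> R"
  shows "gfun (Suc k) (knorm m FF a (Suc k)) = -1"
  using pos_root[OF d a] unfolding gfun_def by simp

lemma Xi_eq: "Xi m nn rr FF a (Suc k) = gfun (Suc k) (knorm m FF a (Suc k))"
proof -
  obtain F where F: "F \<in> level m FF (Suc k)" "a \<in> F" using exists_level by blast
  obtain Fs R where d: "decomp m nn rr FF (Suc k) F Fs R" using decomp_ex[OF F(1)] by blast
  have ex: "\<exists>F Fs R. decomp m nn rr FF (Suc k) F Fs R \<and> a \<in> F \<and>
        ((a \<in> R \<and> gfun (Suc k) (knorm m FF a (Suc k)) = -1) \<or>
         (\<exists>i<nn (Suc k). a \<in> Fs i - R \<and> gfun (Suc k) (knorm m FF a (Suc k)) = int i))"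
  proof (cases "a \<in> R")
    case True then show ?thesis using d F g_root[OF d] by blast
  next
    case False
    then obtain i where "i < nn (Suc k)" "a \<in> Fs i - R" using F dec_U[OF d] by auto
    then show ?thesis using d F g_block[OF d] by blast
  qed
  have un: "v = gfun (Suc k) (knorm m FF a (Suc k))" if H: "\<exists>F Fs R. decomp m nn rr FF (Suc k) F Fs R \<and> a \<in> F \<and>
        ((a \<in> R \<and> v = -1) \<or> (\<exists>i<nn (Suc k). a \<in> Fs i - R \<and> v = int i))" for v
  proof -
    obtain F' Fs' R' where w: "decomp m nn rr FF (Suc k) F' Fs' R'" "a \<in> F'"
       "(a \<in> R' \<and> v = -1) \<or> (\<exists>i<nn (Suc k). a \<in> Fs' i - R' \<and> v = int i)" using H by blast
    show ?thesis using w(3)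
    proof
      assume "a \<in> R' \<and> v = -1" then show ?thesis using g_root[OF w(1)] by simp
    next
      assume "\<exists>i<nn (Suc k). a \<in> Fs' i - R' \<and> v = int i"
      then obtain i where "i<nn (Suc k)" "a \<in> Fs' i - R'" "v = int i" by blast
      then show ?thesis using g_block[OF w(1)] by simp
    qed
  qed
  have "(THE v. \<exists>F Fs R. decomp m nn rr FF (Suc k) F Fs R \<and> a \<in> F \<and>
        ((a \<in> R \<and> v = -1) \<or> (\<exists>i<nn (Suc k). a \<in> Fs i - R \<and> v = int i))) = gfun (Suc k) (knorm m FF a (Suc k))"
    by (rule the_equality) (rule ex, rule un)
  then show ?thesis unfolding Xi_def by simp
qed

lemma Xi_0: "Xi m nn rr FF a 0 = 0" unfolding Xi_def by simp

end


context cs begin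

lemma o_agree: assumes ag: "\<forall>k<l. knorm m FF a k = knorm m FF b k" and k: "k < l"
  shows "o_fun m nn rr FF Cf a k = o_fun m nn rr FF Cf b k"
proof (cases k)
  case 0 then show ?thesis unfolding o_fun_def by (simp add: Xi_0)
next
  case (Suc k')
  have "knorm m FF a k = knorm m FF b k" "knorm m FF a k' = knorm m FF b k'" using ag k Suc by auto
  then show ?thesis unfolding o_fun_def Suc Xi_eq by (simp add: Let_def)
qed

lemma Xi0_first: assumes X: "Xi m nn rr FF a (Suc k) = 0"
  shows "rr (Suc k) \<le> knorm m FF a k \<and> knorm m FF a k < m k"
proof -
  obtain F where F: "F \<in> level m FF (Suc k)" "a \<in> F" using exists_level by blast
  obtain Fs R where d: "decomp m nn rr FF (Suc k) F Fs R" using decomp_ex[OF F(1)] by blast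
  have "a \<notin> R" using g_root[OF d] X Xi_eq by auto
  then obtain i where i: "i < nn (Suc k)" "a \<in> Fs i - R" using F dec_U[OF d] by auto
  have "int i = 0" using g_block[OF d i] X Xi_eq by simp
  then have i0: "i = 0" by simp
  have n0: "0 < nn (Suc k)" using nn2[of k] by simp
  have L: "Fs 0 \<in> level m FF k" using dec_Fs[OF d n0] .
  have a0: "a \<in> Fs 0" using i i0 by auto
  have kn: "knorm m FF a k = card {\<xi>\<in>Fs 0. \<xi> < a}" using knorm_eq[OF L a0] .
  have fin: "finite (Fs 0)" "card (Fs 0) = m k" using level_D[OF L] by auto
  have "R \<subseteq> {\<xi>\<in>Fs 0. \<xi> < a}" using R_sub[OF d n0] R_below[OF d n0] i i0 unfolding set_less_def by auto
  then have "card R \<le> card {\<xi>\<in>Fs 0. \<xi> < a}" using fin by (intro card_mono) auto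
  moreover have "card {\<xi>\<in>Fs 0. \<xi> < a} < card (Fs 0)" using fin a0 by (intro psubset_card_mono) auto
  ultimately show ?thesis using kn fin dec_cardR[OF d] by simp
qed

lemma o_at0: "Xi m nn rr FF a k = 0 \<Longrightarrow> o_fun m nn rr FF Cf a k = 0"
  unfolding o_fun_def by simp

lemma o_atj: "Xi m nn rr FF a k = int j \<Longrightarrow> 0 < j \<Longrightarrow>
   o_fun m nn rr FF Cf a k = (if knorm m FF a (k - 1) \<in> Cf (k - 1) j then int j else - int j)"
  unfolding o_fun_def by simp

end

lemma lex_irrefl: "\<not> lex_less f f" unfolding lex_less_def by auto

lemma lex_agree: assumes "\<forall>k<l. f k = g k" "f l \<noteq> g l" shows "lex_less f g \<longleftrightarrow> f l < g l"
proof
  assume "lex_less f g"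
  then obtain k where k: "f k < g k" "\<forall>j<k. f j = g j" unfolding lex_less_def by blast
  have "k = l" using k assms by (metis less_irrefl linorder_neqE_nat)
  then show "f l < g l" using k by simp
next
  assume "f l < g l" then show "lex_less f g" unfolding lex_less_def using assms by blast
qed

lemma lex_trans: "lex_less f g \<Longrightarrow> lex_less g h \<Longrightarrow> lex_less f h"
proof -
  assume "lex_less f g" "lex_less g h"
  then obtain k1 k2 where a: "f k1 < g k1" "\<forall>j<k1. f j = g j" and b: "g k2 < h k2" "\<forall>j<k2. g j = h j"
    unfolding lex_less_def by blast
  show "lex_less f h" unfolding lex_less_def
  proof (cases "k1 \<le> k2")
    case True
    show "\<exists>k. f k < h k \<and> (\<forall>j<k. f j = h j)"
      apply (rule exI[of _ k1]) using a b True by (metis order.strict_trans order_le_less order_less_le_trans)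
  next
    case False
    show "\<exists>k. f k < h k \<and> (\<forall>j<k. f j = h j)"
      apply (rule exI[of _ k2]) using a b False by (metis not_le order.strict_trans)
  qed
qed

lemma lex_total: assumes "f \<noteq> g" shows "lex_less f g \<or> lex_less g f"
proof -
  have "\<exists>k. f k \<noteq> g k" using assms by auto
  define k where "k = (LEAST k. f k \<noteq> g k)"
  have k: "f k \<noteq> g k" unfolding k_def by (rule LeastI_ex) fact
  have b: "\<forall>j<k. f j = g j" unfolding k_def using not_less_Least by blast
  show ?thesis using k b lex_agree[OF b k] lex_agree[of k g f] by (metis linorder_neqE)
qed

definition rnk :: "('b \<Rightarrow> 'b \<Rightarrow> bool) \<Rightarrow> 'b set \<Rightarrow> 'b \<Rightarrow> nat" where
  "rnk lt a x = card {y\<in>a. lt y x}"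

locale sto =
  fixes lt :: "'b \<Rightarrow> 'b \<Rightarrow> bool"
  assumes irr: "\<not> lt x x" and trn: "lt x y \<Longrightarrow> lt y z \<Longrightarrow> lt x z"
    and tot: "x \<noteq> y \<Longrightarrow> lt x y \<or> lt y x"
begin

lemma rnk_less: "finite a \<Longrightarrow> lt x y \<Longrightarrow> x \<in> a \<Longrightarrow> rnk lt a x < rnk lt a y"
proof -
  assume f: "finite a" and xy: "lt x y" and x: "x \<in> a"
  have "{z\<in>a. lt z x} \<subset> {z\<in>a. lt z y}" using xy x irr trn by blast
  then show ?thesis unfolding rnk_def using f by (intro psubset_card_mono) auto
qed

lemma rnk_inj: "finite a \<Longrightarrow> inj_on (rnk lt a) a"
  by (intro inj_onI) (metis rnk_less tot less_irrefl)

lemma rnk_bound: "finite a \<Longrightarrow> x \<in> a \<Longrightarrow> rnk lt a x < card a"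
  unfolding rnk_def using irr by (intro psubset_card_mono) auto

lemma rnk_img: "finite a \<Longrightarrow> rnk lt a ` a = {..<card a}"
proof -
  assume f: "finite a"
  have s: "rnk lt a ` a \<subseteq> {..<card a}" using rnk_bound f by auto
  have "card (rnk lt a ` a) = card {..<card a}" using card_image[OF rnk_inj[OF f]] by simp
  then show ?thesis using s by (intro card_subset_eq) auto
qed

lemma ord_nth_eq: "finite a \<Longrightarrow> x \<in> a \<Longrightarrow> ord_nth lt a (rnk lt a x) = x"
  unfolding ord_nth_def
proof (rule the_equality)
  assume "finite a" "x \<in> a"
  then show "x \<in> a \<and> card {y \<in> a. lt y x} = rnk lt a x" unfolding rnk_def by simp
next
  fix y assume f: "finite a" "x \<in> a" and y: "y \<in> a \<and> card {z \<in> a. lt z y} = rnk lt a x"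
  then have "rnk lt a y = rnk lt a x" unfolding rnk_def by simp
  then show "y = x" using rnk_inj[OF f(1)] y f(2) by (meson inj_onD)
qed

end

lemma lex_sto: "sto lex_less"
  by unfold_locales (use lex_irrefl lex_trans lex_total in blast)+



lemma nth_el_in: "finite X \<Longrightarrow> s < card X \<Longrightarrow> nth_el X s \<in> X"
  unfolding nth_el_def by (metis length_sorted_list_of_set nth_mem set_sorted_list_of_set)

lemma nth_el_mono: "finite X \<Longrightarrow> s < s' \<Longrightarrow> s' < card X \<Longrightarrow> nth_el X s < nth_el X s'"
  unfolding nth_el_def
  by (metis length_sorted_list_of_set sorted_list_of_set.strict_sorted_key_list_of_set sorted_wrt_nth_less
       map_ident subset_UNIV)

lemma nth_el_ex: "finite X \<Longrightarrow> x \<in> X \<Longrightarrow> \<exists>s<card X. nth_el X s = x"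
  unfolding nth_el_def by (metis in_set_conv_nth length_sorted_list_of_set set_sorted_list_of_set)

lemma nth_el_single: "nth_el {x} 0 = x"
  unfolding nth_el_def by simp

lemma pigeon: fixes f :: "'b \<Rightarrow> 'k::countable"
  assumes "\<not> countable A" shows "\<exists>c. \<not> countable {a\<in>A. f a = c}"
proof (rule ccontr)
  assume "\<not> (\<exists>c. \<not> countable {a\<in>A. f a = c})"
  then have "countable (\<Union>c\<in>UNIV. {a\<in>A. f a = c})" by (intro countable_UN) auto
  moreover have "(\<Union>c\<in>UNIV. {a\<in>A. f a = c}) = A" by auto
  ultimately show False using assms by simp
qed



lemma pigeon2: assumes "countable (f ` A)" "\<not> countable A" shows "\<exists>c. \<not> countable {a\<in>A. f a = c}"
proof (rule ccontr)
  assume "\<not> (\<exists>c. \<not> countable {a\<in>A. f a = c})"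
  then have "countable (\<Union>c\<in>f ` A. {a\<in>A. f a = c})" using assms(1) by (intro countable_UN) auto
  moreover have "(\<Union>c\<in>f ` A. {a\<in>A. f a = c}) = A" by auto
  ultimately show False using assms by simp
qed

lemma captured_D: assumes "captured m nn rr FF l D N"
  obtains mm R where "2 \<le> N" "\<forall>j<N. finite (D j) \<and> card (D j) = mm"
    "\<forall>i<N. \<forall>j<N. i \<noteq> j \<longrightarrow> D i \<inter> D j = R"
    "\<forall>j<N. set_less R (D j - R)"
    "\<forall>i<N. \<forall>j<N. i \<noteq> j \<longrightarrow> set_less (D i - R) (D j - R) \<or> set_less (D j - R) (D i - R)"
    "\<forall>j<N. \<forall>a<card R. Xi m nn rr FF (nth_el (D j) a) l = -1"
    "\<forall>j<N. \<forall>a. card R \<le> a \<and> a < card (D j) \<longrightarrow> Xi m nn rr FF (nth_el (D j) a) l = int j"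
    "\<forall>i<N. \<forall>j<N. i \<noteq> j \<longrightarrow> (\<forall>a. card R \<le> a \<and> a < card (D i) \<longrightarrow>
               Delta m FF (nth_el (D i) a) (nth_el (D j) a) = l)"
proof -
  have c: "2 \<le> N" "\<exists>mm. \<forall>j<N. finite (D j) \<and> card (D j) = mm"
     "\<exists>R. (\<forall>i<N. \<forall>j<N. i \<noteq> j \<longrightarrow> D i \<inter> D j = R) \<and>
          (\<forall>j<N. set_less R (D j - R)) \<and>
          (\<forall>i<N. \<forall>j<N. i \<noteq> j \<longrightarrow> set_less (D i - R) (D j - R) \<or> set_less (D j - R) (D i - R)) \<and>
          (\<forall>j<N. \<forall>a<card R. Xi m nn rr FF (nth_el (D j) a) l = -1) \<and>
          (\<forall>j<N. \<forall>a. card R \<le> a \<and> a < card (D j) \<longrightarrow> Xi m nn rr FF (nth_el (D j) a) l = int j) \<and>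
          (\<forall>i<N. \<forall>j<N. i \<noteq> j \<longrightarrow> (\<forall>a. card R \<le> a \<and> a < card (D i) \<longrightarrow>
               Delta m FF (nth_el (D i) a) (nth_el (D j) a) = l))"
    using assms unfolding captured_def by (simp_all only: simp_thms)
  from c(2) obtain mm where mm: "\<forall>j<N. finite (D j) \<and> card (D j) = mm" by (elim exE)
  from c(3) obtain R where R: "(\<forall>i<N. \<forall>j<N. i \<noteq> j \<longrightarrow> D i \<inter> D j = R) \<and>
          (\<forall>j<N. set_less R (D j - R)) \<and>
          (\<forall>i<N. \<forall>j<N. i \<noteq> j \<longrightarrow> set_less (D i - R) (D j - R) \<or> set_less (D j - R) (D i - R)) \<and>
          (\<forall>j<N. \<forall>a<card R. Xi m nn rr FF (nth_el (D j) a) l = -1) \<and>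
          (\<forall>j<N. \<forall>a. card R \<le> a \<and> a < card (D j) \<longrightarrow> Xi m nn rr FF (nth_el (D j) a) l = int j) \<and>
          (\<forall>i<N. \<forall>j<N. i \<noteq> j \<longrightarrow> (\<forall>a. card R \<le> a \<and> a < card (D i) \<longrightarrow>
               Delta m FF (nth_el (D i) a) (nth_el (D j) a) = l))" by (elim exE)
  show ?thesis using c(1) mm R by (elim conjE) (rule that)
qed

context cs begin

lemma capt_get: assumes capt: "fully_capturing m nn rr FF" and fin: "\<forall>X\<in>S. finite X" and unc: "\<not> countable S"
  shows "\<exists>l>K. \<exists>D. inj_on D {..<nn l} \<and> (\<forall>j<nn l. D j \<in> S) \<and> captured m nn rr FF l D (nn l)"
proof -
  have "infinite {l. 0 < l \<and> (\<exists>D. inj_on D {..<nn l} \<and> (\<forall>j<nn l. D j \<in> S) \<and> captured m nn rr FF l D (nn l))}"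
    using capt fin unc unfolding fully_capturing_def by blast
  then show ?thesis unfolding infinite_nat_iff_unbounded by blast
qed

lemma E_unc: assumes capt: "fully_capturing m nn rr FF" and U: "\<not> countable (UNIV :: 'a set)"
  shows "\<not> countable (range (o_fun m nn rr FF Cf))"
proof
  let ?o = "o_fun m nn rr FF Cf"
  assume c: "countable (range ?o)"
  obtain f where f: "\<not> countable {\<alpha>\<in>(UNIV::'a set). ?o \<alpha> = f}" using pigeon2[OF c U] by blast
  let ?Y = "{\<alpha>\<in>(UNIV::'a set). ?o \<alpha> = f}"
  let ?S = "(\<lambda>\<alpha>. {\<alpha>}) ` ?Y"
  have uS: "\<not> countable ?S" using f countable_image_inj_on[of "\<lambda>\<alpha>. {\<alpha>}" ?Y] by (auto simp: inj_on_def)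
  have fS: "\<forall>X\<in>?S. finite X" by auto
  obtain l D where l: "l > 0" "inj_on D {..<nn l}" "\<forall>j<nn l. D j \<in> ?S" "captured m nn rr FF l D (nn l)"
    using capt_get[OF capt fS uS, of 0] by blast
  obtain k where lk: "l = Suc k" using l(1) gr0_implies_Suc by blast
  have n2: "2 \<le> nn l" using nn2 lk by simp
  obtain \<alpha> where a: "D 0 = {\<alpha>}" "?o \<alpha> = f" using l(3) n2 by force
  have "D 1 \<in> ?S" using l(3) n2 by simp
  then obtain \<beta> where b: "D 1 = {\<beta>}" "?o \<beta> = f" by blast
  have "D 0 \<noteq> D 1"
  proof
    assume "D 0 = D 1"
    then have "(0::nat) = 1" using inj_onD[OF l(2), of 0 1] n2 by simp
    then show False by simp
  qed
  then have ab: "\<alpha> \<noteq> \<beta>" using a b by auto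
  obtain mm R where R: "\<forall>i<nn l. \<forall>j<nn l. i \<noteq> j \<longrightarrow> D i \<inter> D j = R"
     "\<forall>j<nn l. \<forall>a. card R \<le> a \<and> a < card (D j) \<longrightarrow> Xi m nn rr FF (nth_el (D j) a) l = int j"
    using l(4) by (rule captured_D)
  have "D 0 \<inter> D 1 = R" using R(1)[rule_format, of 0 1] n2 by simp
  then have "R = {}" using a b ab by auto
  then have c0: "card R = 0" by simp
  have "Xi m nn rr FF (nth_el (D 0) 0) l = int 0" using R(2)[rule_format, of 0 0] n2 c0 a by simp
  then have x0: "Xi m nn rr FF \<alpha> l = 0" using a by (simp add: nth_el_single)
  have "Xi m nn rr FF (nth_el (D 1) 0) l = int 1" using R(2)[rule_format, of 1 0] n2 c0 b by simp
  then have x1: "Xi m nn rr FF \<beta> l = int 1" using b by (simp add: nth_el_single)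
  have "?o \<alpha> l = 0" using o_at0[OF x0] .
  moreover have "?o \<beta> l \<noteq> 0" using o_atj[of \<beta> l 1] x1 by simp
  ultimately show False using a b by simp
qed

end


context cs begin

lemma ent:
  fixes Cf :: "nat \<Rightarrow> nat \<Rightarrow> nat set" and n :: nat and \<tau> :: "nat \<Rightarrow> nat" and AA :: "(nat \<Rightarrow> int) set set"
  assumes capt: "fully_capturing m nn rr FF"
    and Cen: "\<forall>k. {Cf k i | i. 0 < i \<and> i < nn (Suc k)} = {A. A \<subseteq> {rr (Suc k)..<m k} \<and> card A \<le> n}"
    and Asub: "AA \<subseteq> {a. a \<subseteq> range (o_fun m nn rr FF Cf) \<and> finite a \<and> card a = 2 * n + 1}"
    and unc: "\<not> countable AA"
    and disj: "\<forall>a\<in>AA. \<forall>b\<in>AA. a \<noteq> b \<longrightarrow> a \<inter> b = {}"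
  shows "\<exists>a\<in>AA. \<exists>b\<in>AA. a \<noteq> b \<and>
           (\<forall>i<2 * n + 1. lex_less (ord_nth lex_less a i) (ord_nth lex_less b i) \<longleftrightarrow> \<tau> i = 0)"
proof -
  interpret L: sto lex_less by (rule lex_sto)
  define N where "N = 2 * n + 1"
  define oo where "oo = o_fun m nn rr FF Cf"
  define E where "E = range oo"
  have AAs: "\<And>a. a \<in> AA \<Longrightarrow> a \<subseteq> E \<and> finite a \<and> card a = N" using Asub unfolding N_def E_def oo_def by auto
  define sel where "sel f = (SOME \<alpha>. oo \<alpha> = f)" for f
  have osel: "oo (sel f) = f" if "f \<in> E" for f
    using that unfolding sel_def E_def by (metis (mono_tags, lifting) rangeE someI_ex)
  define X where "X a = sel ` a" for a
  have oX: "oo ` X a = a" if "a \<in> AA" for a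
  proof -
    have "oo ` X a = (\<lambda>f. oo (sel f)) ` a" unfolding X_def by (simp add: image_image)
    also have "\<dots> = a" using osel AAs[OF that] by (intro image_cong[of a a _ id, simplified]) auto
    finally show ?thesis .
  qed
  have Xfin: "finite (X a) \<and> card (X a) = N" if "a \<in> AA" for a
  proof -
    have "inj_on sel a" using osel AAs[OF that] by (metis inj_on_inverseI subsetD)
    then show ?thesis using AAs[OF that] unfolding X_def by (simp add: card_image)
  qed
  have Xdisj: "X a \<inter> X b = {}" if "a \<in> AA" "b \<in> AA" "a \<noteq> b" for a b
  proof (rule ccontr)
    assume "X a \<inter> X b \<noteq> {}"
    then obtain \<alpha> where "\<alpha> \<in> X a" "\<alpha> \<in> X b" by blast
    then have "oo \<alpha> \<in> a" "oo \<alpha> \<in> b" using oX that by blast+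
    then show False using disj that by blast
  qed
  have Xinj: "inj_on X AA" by (intro inj_onI) (metis oX)
  define Kk where "Kk a = (LEAST K. \<exists>F\<in>level m FF K. X a \<subseteq> F)" for a
  have Kk: "\<exists>F\<in>level m FF (Kk a). X a \<subseteq> F" if aA: "a \<in> AA" for a
  proof -
    obtain F where F: "F \<in> FF" "X a \<subseteq> F" using cofinal Xfin[OF aA] by blast
    obtain K where "F \<in> level m FF K" using in_some_level[OF F(1)] by blast
    then have "\<exists>K. \<exists>F\<in>level m FF K. X a \<subseteq> F" using F by blast
    then show ?thesis unfolding Kk_def by (rule LeastI_ex)
  qed
  define kap where "kap a = map (\<lambda>s. rnk lex_less a (oo (nth_el (X a) s))) [0..<N]" for a
  define key where "key a = (Kk a, kap a)" for a
  obtain c where c: "\<not> countable {a\<in>AA. key a = c}" using pigeon[OF unc, of key] by blast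
  define AA' where "AA' = {a\<in>AA. key a = c}"
  obtain K0 kap0 where c': "c = (K0, kap0)" by (cases c)
  have AA'_sub: "AA' \<subseteq> AA" unfolding AA'_def by auto
  have AA'K: "Kk a = K0" "kap a = kap0" if "a \<in> AA'" for a using that c' unfolding AA'_def key_def by auto
  define S where "S = X ` AA'"
  have uS: "\<not> countable S" unfolding S_def using c countable_image_inj_on[OF _ inj_on_subset[OF Xinj AA'_sub]]
    unfolding AA'_def by blast
  have fS: "\<forall>Y\<in>S. finite Y" unfolding S_def using Xfin AA'_sub by auto
  obtain l D where l: "l > K0" "inj_on D {..<nn l}" "\<forall>j<nn l. D j \<in> S" "captured m nn rr FF l D (nn l)"
    using capt_get[OF capt fS uS, of K0] by blast
  obtain k where lk: "l = Suc k" using l(1) gr0_implies_Suc by (metis gr_zeroI less_nat_zero_code)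
  have Kk0: "K0 \<le> k" using l(1) lk by simp
  have n2: "2 \<le> nn l" using nn2 lk by simp
  obtain mm R where R: "\<forall>i<nn l. \<forall>j<nn l. i \<noteq> j \<longrightarrow> D i \<inter> D j = R"
     "\<forall>j<nn l. \<forall>a. card R \<le> a \<and> a < card (D j) \<longrightarrow> Xi m nn rr FF (nth_el (D j) a) l = int j"
     "\<forall>i<nn l. \<forall>j<nn l. i \<noteq> j \<longrightarrow> (\<forall>a. card R \<le> a \<and> a < card (D i) \<longrightarrow>
               Delta m FF (nth_el (D i) a) (nth_el (D j) a) = l)"
    using l(4) by (rule captured_D)
  define A where "A j = (SOME a. a \<in> AA' \<and> D j = X a)" for j
  have A: "A j \<in> AA' \<and> D j = X (A j)" if "j < nn l" for j
  proof -
    have "\<exists>a. a \<in> AA' \<and> D j = X a" using l(3) that unfolding S_def by blast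
    then show ?thesis unfolding A_def by (rule someI_ex)
  qed
  have Dne: "D i \<noteq> D j" if "i < nn l" "j < nn l" "i \<noteq> j" for i j
    using inj_onD[OF l(2), of i j] that by auto
  have Ane: "A i \<noteq> A j" if "i < nn l" "j < nn l" "i \<noteq> j" for i j
    using Dne[OF that] A that by metis
  have R0: "R = {}"
  proof -
    have "D 0 \<inter> D 1 = R" using R(1)[rule_format, of 0 1] n2 by simp
    moreover have "X (A 0) \<inter> X (A 1) = {}" using Xdisj Ane[of 0 1] A[of 0] A[of 1] n2 AA'_sub by auto
    ultimately show ?thesis using A[of 0] A[of 1] n2 by auto
  qed
  have cD: "finite (D j) \<and> card (D j) = N" if "j < nn l" for j using A[OF that] Xfin AA'_sub by auto
  define a0 where "a0 = A 0"
  have a0: "a0 \<in> AA'" "D 0 = X a0" using A[of 0] n2 unfolding a0_def by auto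
  obtain F0 where F0: "F0 \<in> level m FF K0" "X a0 \<subseteq> F0" using Kk[of a0] AA'K[OF a0(1)] a0 AA'_sub by auto
  obtain G where G: "G \<in> level m FF k" "D 0 \<subseteq> G" using lift[OF F0(1) Kk0] F0(2) a0 by auto
  define p where "p s = knorm m FF (nth_el (D 0) s) k" for s
  have pG: "p s = card {\<xi>\<in>G. \<xi> < nth_el (D 0) s}" if "s < N" for s
    unfolding p_def using knorm_eq[OF G(1)] G(2) nth_el_in cD[of 0] n2 that by auto
  have pmono: "p s < p s'" if "s < s'" "s' < N" for s s'
  proof -
    have fG: "finite G" using level_D[OF G(1)] by auto
    have lt: "nth_el (D 0) s < nth_el (D 0) s'" using nth_el_mono cD[of 0] n2 that by auto
    have sN: "s < N" using that by simp
    have inG: "nth_el (D 0) s \<in> G" using nth_el_in[of "D 0" s] cD[of 0] n2 sN G(2) by auto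
    have "{\<xi>\<in>G. \<xi> < nth_el (D 0) s} \<subset> {\<xi>\<in>G. \<xi> < nth_el (D 0) s'}" using lt inG by auto
    then have "card {\<xi>\<in>G. \<xi> < nth_el (D 0) s} < card {\<xi>\<in>G. \<xi> < nth_el (D 0) s'}"
      using fG by (intro psubset_card_mono) auto
    then show ?thesis using pG that by simp
  qed
  have pinj: "s = s'" if "s < N" "s' < N" "p s = p s'" for s s'
    using pmono that by (metis less_irrefl linorder_neqE_nat)
  have Xi0: "Xi m nn rr FF (nth_el (D 0) s) (Suc k) = 0" if "s < N" for s
    using R(2)[rule_format, of 0 s] n2 R0 cD[of 0] that lk by simp
  have prange: "p s \<in> {rr (Suc k)..<m k}" if "s < N" for s
    using Xi0_first[OF Xi0[OF that]] unfolding p_def by simp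
  define I0 where "I0 = {s. s < N \<and> \<tau> (kap0 ! s) = 0}"
  define I1 where "I1 = {s. s < N \<and> \<tau> (kap0 ! s) \<noteq> 0}"
  define P where "P = p ` I0"
  define Q where "Q = p ` I1"
  have cardPQ: "card P \<le> n \<or> card Q \<le> n"
  proof -
    have f: "finite I0" "finite I1" unfolding I0_def I1_def by auto
    have "card P \<le> card I0" "card Q \<le> card I1" unfolding P_def Q_def using f by (auto intro: card_image_le)
    moreover have "card I0 + card I1 = card (I0 \<union> I1)" using f by (intro card_Un_disjoint[symmetric]) (auto simp: I0_def I1_def)
    moreover have "I0 \<union> I1 = {..<N}" unfolding I0_def I1_def by auto
    ultimately have "card I0 + card I1 = 2 * n + 1" "card P \<le> card I0" "card Q \<le> card I1" unfolding N_def by simp_all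
    then show ?thesis by linarith
  qed
  have Pmem: "p s \<in> P \<longleftrightarrow> \<tau> (kap0 ! s) = 0" if "s < N" for s
    unfolding P_def I0_def using pinj that by auto
  have Qmem: "p s \<in> Q \<longleftrightarrow> \<tau> (kap0 ! s) \<noteq> 0" if "s < N" for s
    unfolding Q_def I1_def using pinj that by auto
  have Psub: "P \<subseteq> {rr (Suc k)..<m k}" unfolding P_def I0_def using prange by auto
  have Qsub: "Q \<subseteq> {rr (Suc k)..<m k}" unfolding Q_def I1_def using prange by auto
  have getj: "\<exists>j. 0 < j \<and> j < nn l \<and> Cf k j = Z" if "Z \<subseteq> {rr (Suc k)..<m k}" "card Z \<le> n" for Z
  proof -
    have "Z \<in> {A. A \<subseteq> {rr (Suc k)..<m k} \<and> card A \<le> n}" using that by simp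
    then have "Z \<in> {Cf k i | i. 0 < i \<and> i < nn (Suc k)}" using Cen by blast
    then show ?thesis using lk by blast
  qed
  have cmp: "(lex_less (oo (nth_el (D 0) s)) (oo (nth_el (D j) s)) \<longleftrightarrow> p s \<in> Cf k j) \<and>
             (lex_less (oo (nth_el (D j) s)) (oo (nth_el (D 0) s)) \<longleftrightarrow> p s \<notin> Cf k j)"
    if j: "0 < j" "j < nn l" and s: "s < N" for j s
  proof -
    define \<alpha> where "\<alpha> = nth_el (D 0) s"
    define \<beta> where "\<beta> = nth_el (D j) s"
    have Dl: "Delta m FF \<alpha> \<beta> = l" unfolding \<alpha>_def \<beta>_def
      using R(3)[rule_format, of 0 j s] R0 cD[of 0] n2 j s by simp
    have ag: "\<forall>k'<l. knorm m FF \<alpha> k' = knorm m FF \<beta> k'"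
    proof (intro allI impI)
      fix k' assume "k' < l"
      then have "k' < (LEAST k. knorm m FF \<alpha> k \<noteq> knorm m FF \<beta> k)" using Dl unfolding Delta_def by simp
      then show "knorm m FF \<alpha> k' = knorm m FF \<beta> k'" by (rule not_less_Least[THEN notnotD])
    qed
    have oag: "\<forall>k'<l. oo \<alpha> k' = oo \<beta> k'" unfolding oo_def using o_agree[OF ag] by blast
    have xb: "Xi m nn rr FF \<beta> l = int j" unfolding \<beta>_def using R(2)[rule_format, of j s] R0 cD[of j] j s by simp
    have oa: "oo \<alpha> l = 0" unfolding oo_def \<alpha>_def using o_at0[OF Xi0[OF s]] lk by simp
    have kb: "knorm m FF \<beta> k = p s" using ag lk unfolding p_def \<alpha>_def by simp
    have ob: "oo \<beta> l = (if p s \<in> Cf k j then int j else - int j)"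
      unfolding oo_def using o_atj[OF xb j(1)] lk kb by simp
    have ne: "oo \<alpha> l \<noteq> oo \<beta> l" using oa ob j by simp
    have oag': "\<forall>k'<l. oo \<beta> k' = oo \<alpha> k'" using oag by simp
    show ?thesis unfolding \<alpha>_def[symmetric] \<beta>_def[symmetric]
      using lex_agree[OF oag ne] lex_agree[OF oag' ne[symmetric]] oa ob j by auto
  qed
  have kapn: "kap a ! s = rnk lex_less a (oo (nth_el (X a) s))" if "s < N" for a s
    unfolding kap_def using that by simp
  have ordn: "ord_nth lex_less a (kap0 ! s) = oo (nth_el (X a) s)" if a: "a \<in> AA'" and s: "s < N" for a s
  proof -
    have aA: "a \<in> AA" using a AA'_sub by auto
    have x: "oo (nth_el (X a) s) \<in> a" using nth_el_in[of "X a" s] Xfin[OF aA] s oX[OF aA] by blast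
    have "kap0 ! s = rnk lex_less a (oo (nth_el (X a) s))" using kapn[OF s, of a] AA'K(2)[OF a] by simp
    then show ?thesis using L.ord_nth_eq[of a "oo (nth_el (X a) s)"] x AAs[OF aA] by simp
  qed
  have surj: "\<exists>s<N. kap0 ! s = t" if t: "t < N" for t
  proof -
    have a0A: "a0 \<in> AA" using a0 AA'_sub by auto
    have "t \<in> rnk lex_less a0 ` a0" using L.rnk_img[of a0] AAs[OF a0A] t by simp
    then obtain x where x: "x \<in> a0" "t = rnk lex_less a0 x" by blast
    then obtain y where y: "y \<in> X a0" "x = oo y" using oX[OF a0A] by blast
    obtain s where s: "s < card (X a0)" "nth_el (X a0) s = y" using nth_el_ex[of "X a0" y] Xfin[OF a0A] y by blast
    have sN: "s < N" using s Xfin[OF a0A] by simp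
    have "kap0 ! s = t" using kapn[OF sN, of a0] AA'K(2)[OF a0(1)] s y x by simp
    then show ?thesis using sN by blast
  qed
  from cardPQ show ?thesis
  proof
    assume "card P \<le> n"
    then obtain j where j: "0 < j" "j < nn l" "Cf k j = P" using getj Psub by blast
    define b where "b = A j"
    have b: "b \<in> AA'" "D j = X b" using A[OF j(2)] unfolding b_def by auto
    have ab: "a0 \<noteq> b" using Ane[of 0 j] j n2 unfolding a0_def b_def by auto
    have "\<forall>t<N. lex_less (ord_nth lex_less a0 t) (ord_nth lex_less b t) \<longleftrightarrow> \<tau> t = 0"
    proof (intro allI impI)
      fix t assume t: "t < N"
      obtain s where s: "s < N" "kap0 ! s = t" using surj[OF t] by blast
      have "ord_nth lex_less a0 t = oo (nth_el (D 0) s)" using ordn[OF a0(1) s(1)] s a0 by simp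
      moreover have "ord_nth lex_less b t = oo (nth_el (D j) s)" using ordn[OF b(1) s(1)] s b by simp
      moreover have "lex_less (oo (nth_el (D 0) s)) (oo (nth_el (D j) s)) \<longleftrightarrow> p s \<in> Cf k j"
        using cmp[OF j(1,2) s(1)] by (rule conjunct1)
      moreover have "p s \<in> Cf k j \<longleftrightarrow> \<tau> t = 0" using j(3) Pmem[OF s(1)] s(2) by simp
      ultimately show "lex_less (ord_nth lex_less a0 t) (ord_nth lex_less b t) \<longleftrightarrow> \<tau> t = 0"
        by (simp only:)
    qed
    then have H: "a0 \<noteq> b \<and> (\<forall>t<2 * n + 1. lex_less (ord_nth lex_less a0 t) (ord_nth lex_less b t) \<longleftrightarrow> \<tau> t = 0)"
      using ab unfolding N_def by simp
    have "a0 \<in> AA" "b \<in> AA" using a0(1) b(1) AA'_sub by auto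
    then show ?thesis using H by (intro bexI)
  next
    assume "card Q \<le> n"
    then obtain j where j: "0 < j" "j < nn l" "Cf k j = Q" using getj Qsub by blast
    define b where "b = A j"
    have b: "b \<in> AA'" "D j = X b" using A[OF j(2)] unfolding b_def by auto
    have ab: "b \<noteq> a0" using Ane[of 0 j] j n2 unfolding a0_def b_def by auto
    have "\<forall>t<N. lex_less (ord_nth lex_less b t) (ord_nth lex_less a0 t) \<longleftrightarrow> \<tau> t = 0"
    proof (intro allI impI)
      fix t assume t: "t < N"
      obtain s where s: "s < N" "kap0 ! s = t" using surj[OF t] by blast
      have "ord_nth lex_less a0 t = oo (nth_el (D 0) s)" using ordn[OF a0(1) s(1)] s a0 by simp
      moreover have "ord_nth lex_less b t = oo (nth_el (D j) s)" using ordn[OF b(1) s(1)] s b by simp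
      moreover have "lex_less (oo (nth_el (D j) s)) (oo (nth_el (D 0) s)) \<longleftrightarrow> p s \<notin> Cf k j"
        using cmp[OF j(1,2) s(1)] by (rule conjunct2)
      moreover have "p s \<notin> Cf k j \<longleftrightarrow> \<tau> t = 0" using j(3) Qmem[OF s(1)] s(2) by simp
      ultimately show "lex_less (ord_nth lex_less b t) (ord_nth lex_less a0 t) \<longleftrightarrow> \<tau> t = 0"
        by (simp only:)
    qed
    then have H: "b \<noteq> a0 \<and> (\<forall>t<2 * n + 1. lex_less (ord_nth lex_less b t) (ord_nth lex_less a0 t) \<longleftrightarrow> \<tau> t = 0)"
      using ab unfolding N_def by simp
    have "a0 \<in> AA" "b \<in> AA" using a0(1) b(1) AA'_sub by auto
    then show ?thesis using H by (intro bexI)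
  qed
qed

end


theorem mainTheorem7:
  fixes m nn rr :: "nat \<Rightarrow> nat"
    and \<F> :: "'a::wellorder set set"
    and C :: "nat \<Rightarrow> nat \<Rightarrow> nat set"
    and n :: nat
  assumes omega1_unc: "\<not> countable (UNIV :: 'a set)"
    and omega1_seg: "\<forall>x::'a. countable {y. y < x}"
    and scheme: "construction_scheme m nn rr \<F>"
    and capt: "fully_capturing m nn rr \<F>"
    and big: "\<forall>k. nn (Suc k) \<ge> 2 ^ m k"
    and C_enum: "\<forall>k. {C k i | i. 0 < i \<and> i < nn (Suc k)} =
                     {A. A \<subseteq> {rr (Suc k)..<m k} \<and> card A \<le> n}"
  shows "entangled lex_less (2 * n + 1) (range (o_fun m nn rr \<F> C))"
proof -
  have infU: "infinite (UNIV::'a set)" using omega1_unc countable_finite by blast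
  interpret cs m nn rr \<F> by unfold_locales (fact scheme, fact infU)
  show ?thesis unfolding entangled_def
  proof (intro conjI allI impI)
    show "\<not> countable (range (o_fun m nn rr \<F> C))" by (rule E_unc[OF capt omega1_unc])
  next
    fix \<tau> :: "nat \<Rightarrow> nat" and AA
    assume h: "(\<forall>i<2 * n + 1. \<tau> i < 2) \<and>
        AA \<subseteq> {a. a \<subseteq> range (o_fun m nn rr \<F> C) \<and> finite a \<and> card a = 2 * n + 1} \<and>
        \<not> countable AA \<and> (\<forall>a\<in>AA. \<forall>b\<in>AA. a \<noteq> b \<longrightarrow> a \<inter> b = {})"
    then have h2: "AA \<subseteq> {a. a \<subseteq> range (o_fun m nn rr \<F> C) \<and> finite a \<and> card a = 2 * n + 1}"
      and h3: "\<not> countable AA" and h4: "\<forall>a\<in>AA. \<forall>b\<in>AA. a \<noteq> b \<longrightarrow> a \<inter> b = {}" by auto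
    show "\<exists>a\<in>AA. \<exists>b\<in>AA. a \<noteq> b \<and>
           (\<forall>i<2 * n + 1. lex_less (ord_nth lex_less a i) (ord_nth lex_less b i) \<longleftrightarrow> \<tau> i = 0)"
      by (rule ent[OF capt C_enum h2 h3 h4])
  qed
qed


end
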